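(* Let $k\ge 2$ and $i\in\{1,\ldots,k-1\}$. If $\binom{k}{i}$ and $\binom{k-1}{i}$ are both odd, then $J(2k,k,i)$ does not admit perfect state transfer.
   Context: $J(2k,k,i)$ is the graph on the $k$-subsets of $\{1,\ldots,2k\}$ with $A\sim B$ iff $|A\cap B|=i$. For a simple graph $X$ with adjacency matrix $A$, let $\mathcal{H}_X(t)=e^{itA}$. $X$ admits perfect state transfer (PST) if $|\mathcal{H}_X(\tau)_{u,v}|=1$ for some vertices $u\ne v$ and some $\tau>0$. *)

theory Defs
  imports Complex_Main
begin

text \<open>A simple graph is given by a finite vertex set V and an adjacency
  matrix M :: 'a => 'a => complex (entries indexed by vertices of V).
  Matrix powers are computed entrywise over V.\<close>

fun mat_pow :: "'a set \<Rightarrow> ('a \<Rightarrow> 'a \<Rightarrow> complex) \<Rightarrow> nat \<Rightarrow> 'a \<Rightarrow> 'a \<Rightarrow> complex" where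
  "mat_pow V M 0 u v = (if u = v then 1 else 0)"
| "mat_pow V M (Suc n) u v = (\<Sum>w\<in>V. M u w * mat_pow V M n w v)"

definition transition :: "'a set \<Rightarrow> ('a \<Rightarrow> 'a \<Rightarrow> complex) \<Rightarrow> real \<Rightarrow> 'a \<Rightarrow> 'a \<Rightarrow> complex" where
  "transition V M t u v = (\<Sum>n. (\<i> * complex_of_real t) ^ n / fact n * mat_pow V M n u v)"

definition admits_PST :: "'a set \<Rightarrow> ('a \<Rightarrow> 'a \<Rightarrow> complex) \<Rightarrow> bool" where
  "admits_PST V M \<longleftrightarrow>
     (\<exists>u\<in>V. \<exists>v\<in>V. u \<noteq> v \<and> (\<exists>\<tau>>0. cmod (transition V M \<tau> u v) = 1))"

definition J_vertices :: "nat \<Rightarrow> nat \<Rightarrow> nat set set" where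
  "J_vertices n k = {A. A \<subseteq> {1..n} \<and> card A = k}"

definition J_adj :: "nat \<Rightarrow> nat set \<Rightarrow> nat set \<Rightarrow> complex" where
  "J_adj i A B = (if card (A \<inter> B) = i then 1 else 0)"

end

theory Submission
  imports Defs
begin


locale rsg =
  fixes V :: "'a set" and M :: "'a \<Rightarrow> 'a \<Rightarrow> complex"
  assumes finV: "finite V"
    and symM: "\<And>u w. M u w = M w u"
    and realM: "\<And>u w. cnj (M u w) = M u w"
    and bndM: "\<And>u w. cmod (M u w) \<le> 1"
begin

abbreviation P where "P \<equiv> mat_pow V M"

lemma pow_add: "u \<in> V \<Longrightarrow> P (m+n) u v = (\<Sum>w\<in>V. P m u w * P n w v)"
proof (induction m arbitrary: u)
  case 0
  have "(\<Sum>w\<in>V. P 0 u w * P n w v) = (\<Sum>w\<in>V. if u = w then P n w v else 0)"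
    by (rule sum.cong) auto
  with 0 show ?case by (simp add: sum.delta finV)
next
  case (Suc m)
  have "P (Suc m + n) u v = (\<Sum>y\<in>V. M u y * P (m+n) y v)" by simp
  also have "\<dots> = (\<Sum>y\<in>V. M u y * (\<Sum>w\<in>V. P m y w * P n w v))"
    by (rule sum.cong) (auto simp: Suc.IH)
  also have "\<dots> = (\<Sum>y\<in>V. \<Sum>w\<in>V. M u y * P m y w * P n w v)"
    by (simp add: sum_distrib_left mult.assoc)
  also have "\<dots> = (\<Sum>w\<in>V. \<Sum>y\<in>V. M u y * P m y w * P n w v)"
    by (rule sum.swap)
  also have "\<dots> = (\<Sum>w\<in>V. P (Suc m) u w * P n w v)"
    by (simp add: sum_distrib_right)
  finally show ?case .
qed

lemma pow_one: "v \<in> V \<Longrightarrow> P 1 w v = M w v"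
proof -
  assume v: "v \<in> V"
  have "P 1 w v = (\<Sum>y\<in>V. if y = v then M w y else 0)"
    by simp (rule sum.cong, auto)
  with v show ?thesis by (simp add: sum.delta' finV)
qed

lemma pow_sym: "u \<in> V \<Longrightarrow> v \<in> V \<Longrightarrow> P n u v = P n v u"
proof (induction n arbitrary: u v)
  case 0 then show ?case by simp
next
  case (Suc n)
  have "P (Suc n) u v = P (n+1) u v" by simp
  also have "\<dots> = (\<Sum>w\<in>V. P n u w * P 1 w v)" by (rule pow_add[OF Suc.prems(1)])
  also have "\<dots> = (\<Sum>w\<in>V. P n u w * M w v)"
    by (rule sum.cong[OF refl], subst pow_one[OF Suc.prems(2)], rule refl)
  also have "\<dots> = (\<Sum>w\<in>V. M v w * P n w u)"
    by (rule sum.cong) (auto simp: Suc.prems Suc.IH symM)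
  also have "\<dots> = P (Suc n) v u" by simp
  finally show ?case .
qed

lemma pow_cnj: "cnj (P n u v) = P n u v"
  by (induction n arbitrary: u) (auto simp: realM)

lemma pow_bnd: "cmod (P n u v) \<le> real (card V) ^ n"
proof (induction n arbitrary: u)
  case 0 then show ?case by simp
next
  case (Suc n)
  have "cmod (P (Suc n) u v) \<le> (\<Sum>w\<in>V. cmod (M u w * P n w v))"
    by (simp add: norm_sum)
  also have "\<dots> \<le> (\<Sum>w\<in>V. real (card V) ^ n)"
    by (rule sum_mono) (auto simp: norm_mult intro: mult_mono' [of _ 1 _ "real (card V) ^ n", simplified] bndM Suc.IH)
  also have "\<dots> = real (card V) ^ Suc n" by simp
  finally show ?case .
qed

definition cc :: "real \<Rightarrow> nat \<Rightarrow> complex" where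
  "cc t n = (\<i> * complex_of_real t) ^ n / fact n"

abbreviation H where "H \<equiv> transition V M"

lemma H_def': "H t u v = (\<Sum>n. cc t n * P n u v)"
  by (simp add: transition_def cc_def)

lemma summ_norm: "summable (\<lambda>n. cmod (cc t n * P n u v))"
proof (rule summable_comparison_test')
  show "summable (\<lambda>n. inverse (fact n) * (\<bar>t\<bar> * real (card V)) ^ n)" by (rule summable_exp)
  fix n :: nat
  have "cmod (cc t n * P n u v) = \<bar>t\<bar>^n / fact n * cmod (P n u v)"
    by (simp add: cc_def norm_mult norm_divide norm_power)
  also have "\<dots> \<le> \<bar>t\<bar>^n / fact n * real (card V) ^ n"
    by (rule mult_left_mono) (auto simp: pow_bnd)
  also have "\<dots> = inverse (fact n) * (\<bar>t\<bar> * real (card V)) ^ n"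
    by (simp add: power_mult_distrib field_simps)
  finally show "norm (cmod (cc t n * P n u v)) \<le> inverse (fact n) * (\<bar>t\<bar> * real (card V)) ^ n" by simp
qed

lemma summ: "summable (\<lambda>n. cc t n * P n u v)"
  by (rule summable_norm_cancel[OF summ_norm])

lemma cc_add: "(\<Sum>m\<le>N. cc s m * cc t (N - m)) = cc (s+t) N"
proof -
  have "cc (s+t) N = (\<i>*complex_of_real s + \<i>*complex_of_real t)^N / fact N"
    by (simp add: cc_def distrib_left)
  also have "\<dots> = (\<Sum>m\<le>N. of_nat (N choose m) * (\<i>*complex_of_real s)^m * (\<i>*complex_of_real t)^(N-m)) / fact N"
    by (simp add: binomial_ring)
  also have "\<dots> = (\<Sum>m\<le>N. cc s m * cc t (N - m))"
    unfolding sum_divide_distrib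
    by (rule sum.cong) (auto simp: binomial_fact cc_def field_simps)
  finally show ?thesis by simp
qed

lemma H_mult: assumes u: "u \<in> V" shows "(\<Sum>w\<in>V. H s u w * H t w v) = H (s+t) u v"
proof -
  have "(\<Sum>w\<in>V. H s u w * H t w v) = (\<Sum>w\<in>V. \<Sum>N. \<Sum>m\<le>N. (cc s m * P m u w) * (cc t (N-m) * P (N-m) w v))"
    by (rule sum.cong) (auto simp: H_def' Cauchy_product summ_norm)
  also have "\<dots> = (\<Sum>N. \<Sum>w\<in>V. \<Sum>m\<le>N. (cc s m * P m u w) * (cc t (N-m) * P (N-m) w v))"
    by (rule suminf_sum[symmetric]) (rule summable_Cauchy_product; rule summ_norm)
  also have "\<dots> = (\<Sum>N. cc (s+t) N * P N u v)"
  proof (rule arg_cong[where f=suminf], rule ext)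
    fix N
    have "(\<Sum>w\<in>V. \<Sum>m\<le>N. (cc s m * P m u w) * (cc t (N-m) * P (N-m) w v))
        = (\<Sum>m\<le>N. cc s m * cc t (N-m) * (\<Sum>w\<in>V. P m u w * P (N-m) w v))"
      by (subst sum.swap) (simp add: sum_distrib_left mult_ac)
    also have "\<dots> = (\<Sum>m\<le>N. cc s m * cc t (N-m) * P N u v)"
      by (rule sum.cong) (auto simp: pow_add[OF u, symmetric])
    also have "\<dots> = cc (s+t) N * P N u v"
      by (simp add: sum_distrib_right[symmetric] cc_add)
    finally show "(\<Sum>w\<in>V. \<Sum>m\<le>N. (cc s m * P m u w) * (cc t (N-m) * P (N-m) w v)) = cc (s+t) N * P N u v" .
  qed
  also have "\<dots> = H (s+t) u v" by (simp add: H_def')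
  finally show ?thesis .
qed

lemma H_cnj: "cnj (H t u v) = H (-t) u v"
proof -
  have "(\<lambda>n. cc t n * P n u v) sums H t u v" using summ by (simp add: H_def' summable_sums)
  hence "(\<lambda>n. cnj (cc t n * P n u v)) sums cnj (H t u v)" by (rule sums_cnj[THEN iffD2])
  moreover have "(\<lambda>n. cnj (cc t n * P n u v)) = (\<lambda>n. cc (-t) n * P n u v)"
    by (auto simp: cc_def pow_cnj fun_eq_iff)
  ultimately show ?thesis by (simp add: H_def' sums_iff)
qed

lemma H_sym: "u \<in> V \<Longrightarrow> v \<in> V \<Longrightarrow> H t u v = H t v u"
  by (simp add: H_def' pow_sym)

lemma H_zero: "H 0 u u = 1"
proof -
  have "(\<lambda>n. cc 0 n * P n u u) = (\<lambda>n. if n = 0 then 1 else 0)"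
    by (auto simp: cc_def fun_eq_iff)
  moreover have "(\<lambda>n::nat. if n = 0 then (1::complex) else 0) sums 1"
    using sums_single[of 0 "\<lambda>_. 1::complex"] by simp
  ultimately show ?thesis by (simp add: H_def' sums_iff)
qed

lemma unitary: assumes u: "u \<in> V" shows "(\<Sum>w\<in>V. (cmod (H t u w))^2) = 1"
proof -
  have "complex_of_real (\<Sum>w\<in>V. (cmod (H t u w))^2) = (\<Sum>w\<in>V. H t u w * cnj (H t u w))"
    unfolding of_real_sum complex_norm_square ..
  also have "\<dots> = (\<Sum>w\<in>V. H t u w * H (-t) w u)"
    by (rule sum.cong) (auto simp: H_cnj H_sym u)
  also have "\<dots> = 1" by (simp add: H_mult u H_zero)
  finally show ?thesis by (metis of_real_eq_1_iff)
qed

lemma row: assumes u: "u \<in> V" and v: "v \<in> V" and h: "cmod (H t u v) = 1"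
  and w: "w \<in> V" "w \<noteq> v" shows "H t u w = 0"
proof -
  have "(\<Sum>w\<in>V. (cmod (H t u w))^2) = (cmod (H t u v))^2 + (\<Sum>w\<in>V-{v}. (cmod (H t u w))^2)"
    by (simp add: sum.remove[OF finV v])
  hence "(\<Sum>w\<in>V-{v}. (cmod (H t u w))^2) = 0" using unitary[OF u] h by simp
  hence "\<forall>w\<in>V-{v}. (cmod (H t u w))^2 = 0"
    by (subst (asm) sum_nonneg_eq_0_iff) (auto simp: finV)
  with w show ?thesis by auto
qed

lemma eig_pow: assumes eig: "\<And>y. y \<in> V \<Longrightarrow> (\<Sum>w\<in>V. M y w * x w) = \<theta> * x y"
  shows "u \<in> V \<Longrightarrow> (\<Sum>w\<in>V. P n u w * x w) = \<theta>^n * x u"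
proof (induction n arbitrary: u)
  case 0
  have "(\<Sum>w\<in>V. P 0 u w * x w) = (\<Sum>w\<in>V. if u = w then x w else 0)"
    by (rule sum.cong) auto
  with 0 show ?case by (simp add: sum.delta finV)
next
  case (Suc n)
  have "(\<Sum>w\<in>V. P (Suc n) u w * x w) = (\<Sum>w\<in>V. \<Sum>y\<in>V. M u y * P n y w * x w)"
    by (simp add: sum_distrib_right sum_distrib_left mult.assoc)
  also have "\<dots> = (\<Sum>y\<in>V. M u y * (\<Sum>w\<in>V. P n y w * x w))"
    by (subst sum.swap) (simp add: sum_distrib_left mult.assoc)
  also have "\<dots> = (\<Sum>y\<in>V. \<theta>^n * (M u y * x y))"
    by (rule sum.cong) (auto simp: Suc.IH)
  also have "\<dots> = \<theta>^Suc n * x u"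
    by (simp add: sum_distrib_left[symmetric] eig Suc.prems)
  finally show ?case .
qed

lemma eig_H: assumes eig: "\<And>y. y \<in> V \<Longrightarrow> (\<Sum>w\<in>V. M y w * x w) = \<theta> * x y"
  and u: "u \<in> V"
  shows "(\<Sum>w\<in>V. H t u w * x w) = exp (\<i> * complex_of_real t * \<theta>) * x u"
proof -
  have "(\<Sum>w\<in>V. H t u w * x w) = (\<Sum>w\<in>V. \<Sum>n. cc t n * P n u w * x w)"
    by (rule sum.cong) (auto simp: H_def' suminf_mult2[OF summ])
  also have "\<dots> = (\<Sum>n. \<Sum>w\<in>V. cc t n * P n u w * x w)"
    by (rule suminf_sum[symmetric]) (rule summable_mult2, rule summ)
  also have "\<dots> = (\<Sum>n. (\<i> * complex_of_real t * \<theta>)^n /\<^sub>R fact n * x u)"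
  proof (rule arg_cong[where f=suminf], rule ext)
    fix n
    have "(\<Sum>w\<in>V. cc t n * P n u w * x w) = cc t n * (\<Sum>w\<in>V. P n u w * x w)"
      by (simp add: sum_distrib_left mult.assoc)
    also have "\<dots> = cc t n * \<theta>^n * x u" by (simp add: eig_pow[OF eig u])
    finally show "(\<Sum>w\<in>V. cc t n * P n u w * x w) = (\<i> * complex_of_real t * \<theta>)^n /\<^sub>R fact n * x u"
      by (simp add: cc_def scaleR_conv_of_real power_mult_distrib field_simps)
  qed
  also have "\<dots> = exp (\<i> * complex_of_real t * \<theta>) * x u"
    by (rule sums_unique[symmetric], rule sums_mult2, rule exp_converges)
  finally show ?thesis .
qed

lemma PST_eig: assumes eig: "\<And>y. y \<in> V \<Longrightarrow> (\<Sum>w\<in>V. M y w * x w) = \<theta> * x y"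
  and u: "u \<in> V" and v: "v \<in> V" and h: "cmod (H t u v) = 1"
  shows "H t u v * x v = exp (\<i> * complex_of_real t * \<theta>) * x u"
proof -
  have "(\<Sum>w\<in>V. H t u w * x w) = H t u v * x v + (\<Sum>w\<in>V-{v}. H t u w * x w)"
    by (simp add: sum.remove[OF finV v])
  also have "(\<Sum>w\<in>V-{v}. H t u w * x w) = 0"
    by (rule sum.neutral) (auto simp: row[OF u v h])
  finally show ?thesis using eig_H[OF eig u] by simp
qed

end



lemma binom_2n_step: "(Suc (Suc n) choose Suc (Suc p)) = (n choose p) + 2 * (n choose Suc p) + (n choose Suc (Suc p))"
  by simp

lemma even_2n_odd: "even ((2*n) choose (2*m+1))"
proof (induction n arbitrary: m)
  case 0 then show ?case by simp
next
  case (Suc n)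
  show ?case
  proof (cases m)
    case 0 then show ?thesis by simp
  next
    case (Suc m')
    have "2 * Suc n = Suc (Suc (2*n))" by simp
    moreover have "2*m+1 = Suc (Suc (2*m'+1))" using Suc by simp
    ultimately have "(2 * Suc n choose (2*m+1)) = ((2*n) choose (2*m'+1)) + 2 * ((2*n) choose Suc (2*m'+1)) + ((2*n) choose (2*(m'+1)+1))"
      by (simp only: binom_2n_step) simp
    then show ?thesis using Suc.IH[of m'] Suc.IH[of "m'+1"] by simp
  qed
qed

lemma odd_2n_even: "odd ((2*n) choose (2*m)) \<longleftrightarrow> odd (n choose m)"
proof (induction n arbitrary: m)
  case 0 then show ?case by (cases m) simp_all
next
  case (Suc n)
  show ?case
  proof (cases m)
    case 0 then show ?thesis by simp
  next
    case (Suc m')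
    have "2 * Suc n = Suc (Suc (2*n))" by simp
    moreover have "2*m = Suc (Suc (2*m'))" using Suc by simp
    ultimately have "(2 * Suc n choose (2*m)) = ((2*n) choose (2*m')) + 2 * ((2*n) choose Suc (2*m')) + ((2*n) choose (2*(m'+1)))"
      by (simp only: binom_2n_step) simp
    moreover have "(Suc n choose m) = (n choose m') + (n choose (m'+1))" using Suc by simp
    ultimately show ?thesis using Suc.IH[of m'] Suc.IH[of "m'+1"] by simp
  qed
qed

lemma onebit: assumes "e < 2" "f < 2"
  shows "odd ((2*n+e) choose (2*m+f)) \<longleftrightarrow> odd (n choose m) \<and> odd (e choose f)"
proof -
  consider "e = 0" "f = 0" | "e = 0" "f = 1" | "e = 1" "f = 0" | "e = 1" "f = 1" using assms by linarith
  then show ?thesis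
  proof cases
    case 1 then show ?thesis by (simp add: odd_2n_even)
  next
    case 2 then show ?thesis using even_2n_odd[of n m] by simp
  next
    case 3
    show ?thesis
    proof (cases m)
      case 0 then show ?thesis using 3 by simp
    next
      case (Suc m')
      have "(2*n+1) choose (2*m) = ((2*n) choose (2*m'+1)) + ((2*n) choose (2*m))"
        using Suc by (simp add: numeral_2_eq_2)
      then show ?thesis using 3 even_2n_odd[of n m'] odd_2n_even[of n m] by simp
    qed
  next
    case 4
    have "(2*n+1) choose (2*m+1) = ((2*n) choose (2*m)) + ((2*n) choose (2*m+1))" by simp
    then show ?thesis using 4 even_2n_odd[of n m] odd_2n_even[of n m] by simp
  qed
qed

lemma lucas_split: "b < 2^s \<Longrightarrow> d < 2^s \<Longrightarrow>
  odd ((2^s*a + b) choose (2^s*c + d)) \<longleftrightarrow> odd (a choose c) \<and> odd (b choose d)"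
proof (induction s arbitrary: b d)
  case 0 then show ?case by simp
next
  case (Suc s)
  have b: "b div 2 < 2^s" "d div 2 < 2^s" using Suc.prems by auto
  have e1: "2^Suc s*a + b = 2*(2^s*a + b div 2) + b mod 2" by simp
  have e2: "2^Suc s*c + d = 2*(2^s*c + d div 2) + d mod 2" by simp
  have e3: "b = 2*(b div 2) + b mod 2" "d = 2*(d div 2) + d mod 2" by simp_all
  show ?case
    apply (subst e1, subst e2, subst onebit, simp, simp)
    apply (subst Suc.IH[OF b])
    apply (subst (3) e3(1), subst (3) e3(2), subst onebit, simp, simp)
    by blast
qed

lemma odd_pow2_minus1: "d < 2^s \<Longrightarrow> odd ((2^s - 1) choose d)"
proof (induction s arbitrary: d)
  case 0 then show ?case by simp
next
  case (Suc s)
  have e1: "(2::nat)^Suc s - 1 = 2*(2^s - 1) + 1" by (induct s) auto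
  have e2: "d = 2*(d div 2) + d mod 2" by simp
  have "d div 2 < 2^s" using Suc.prems by auto
  then show ?case
    apply (subst e1, subst e2, subst onebit, simp, simp)
    using Suc.IH by (cases "d mod 2 = 0") auto
qed

lemma odd_decomp: "n \<ge> (1::nat) \<Longrightarrow> \<exists>s q. n = 2^s*(2*q+1)"
proof (induction n rule: less_induct)
  case (less n)
  show ?case
  proof (cases "odd n")
    case True
    then have "n = 2^0*(2*(n div 2)+1)" by simp
    then show ?thesis by blast
  next
    case False
    then obtain m where m: "n = 2*m" by blast
    with less.prems have "m \<ge> 1" "m < n" by auto
    from less.IH[OF this(2,1)] obtain s q where "m = 2^s*(2*q+1)" by blast
    with m have "n = 2^Suc s*(2*q+1)" by simp
    then show ?thesis by blast
  qed
qed

lemma nt_main: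
  assumes i1: "1 \<le> i" and ik: "i < k" and o1: "odd (k choose i)" and o2: "odd ((k-1) choose i)"
  shows "\<exists>j. 2 \<le> j \<and> j \<le> i \<and> j - 1 \<le> k - i \<and> even ((k-j) choose i) \<and>
           (\<forall>t. 1 \<le> t \<and> t \<le> j \<longrightarrow> odd ((k-j) choose (i-t)))"
proof -
  obtain s q where i: "i = 2^s*(2*q+1)" using odd_decomp[OF i1] by blast
  define p :: nat where "p = 2^s"
  have p1: "p \<ge> 1" by (simp add: p_def)
  define K where "K = k div p"
  define r where "r = k mod p"
  have k: "k = p*K + r" by (simp add: K_def r_def)
  have rp: "r < p" using p1 by (simp add: r_def)
  have ip: "i = p*(2*q+1) + 0" using i p_def by simp
  have p0: "0 < p" using p1 by simp
  note LS = lucas_split[of _ s _ _, folded p_def]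
  have pm1: "p - 1 < p" using p1 by simp
  have "odd ((p*K + r) choose (p*(2*q+1) + 0))" using o1 k ip by metis
  hence oK: "odd (K choose (2*q+1))" using LS[OF rp p0] by blast
  have Kge: "2*q+1 \<le> K"
  proof (rule ccontr)
    assume "\<not> 2*q+1 \<le> K"
    hence "K choose (2*q+1) = 0" by (intro binomial_eq_0) simp
    with oK show False by (metis dvd_0_right)
  qed
  have "odd K"
  proof (rule ccontr)
    assume "\<not> odd K"
    then obtain K'' where "K = 2*K''+0" by auto
    with oK onebit[of 0 1 K'' q] show False by simp
  qed
  then obtain K' where K': "K = 2*K'+1" using oddE by blast
  have oK': "odd (K' choose q)" using oK onebit[of 1 1 K' q] K' by simp
  have r1: "r \<ge> 1"
  proof (rule ccontr)
    assume "\<not> r \<ge> 1"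
    hence r0: "r = 0" by simp
    have "k - 1 = p*(2*K') + (p - 1)" using k r0 K' p1 by (simp add: algebra_simps)
    hence "odd ((p*(2*K') + (p-1)) choose (p*(2*q+1) + 0))" using o2 ip by simp
    hence "odd ((2*K') choose (2*q+1))" using LS[OF pm1 p0] by blast
    thus False using even_2n_odd by simp
  qed
  define j where "j = r + 1"
  have N: "k - j = p*(2*K') + (p - 1)" using k K' p1 r1 rp by (simp add: j_def algebra_simps)
  have jp: "j \<le> p" using rp by (simp add: j_def)
  have "even ((k-j) choose i)"
  proof (rule ccontr)
    assume "\<not> even ((k-j) choose i)"
    hence "odd ((p*(2*K') + (p-1)) choose (p*(2*q+1) + 0))" using N ip by simp
    hence "odd ((2*K') choose (2*q+1))" using LS[OF pm1 p0] by blast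
    thus False using even_2n_odd by simp
  qed
  moreover have "\<forall>t. 1 \<le> t \<and> t \<le> j \<longrightarrow> odd ((k-j) choose (i-t))"
  proof (intro allI impI)
    fix t assume t: "1 \<le> t \<and> t \<le> j"
    have it: "i - t = p*(2*q) + (p - t)" using ip t jp by (simp add: algebra_simps)
    have "odd ((2*K') choose (2*q))" using oK' odd_2n_even by simp
    moreover have "odd ((p - 1) choose (p - t))" unfolding p_def
      by (rule odd_pow2_minus1) (use t jp p_def in auto)
    moreover have "p - t < p" using t p1 by simp
    ultimately show "odd ((k-j) choose (i-t))" unfolding N it using LS[OF pm1 \<open>p - t < p\<close>] by blast
  qed
  moreover have "2 \<le> j" using r1 by (simp add: j_def)
  moreover have "j \<le> i"
  proof -
    have "p \<le> p*(2*q+1)" by simp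
    thus ?thesis using jp ip by linarith
  qed
  moreover have "j - 1 \<le> k - i"
  proof -
    have "p*(2*q+1) \<le> p*K" using Kge by (rule mult_le_mono2)
    thus ?thesis using k ip by (simp add: j_def)
  qed
  ultimately show ?thesis by blast
qed




definition cnt :: "nat \<Rightarrow> nat \<Rightarrow> nat \<Rightarrow> nat \<Rightarrow> int" where
  "cnt k i j t = (if t \<le> i \<and> j - t \<le> k - i
     then int ((k-j) choose (i-t)) * int ((k-j) choose ((k-i)-(j-t))) else 0)"

definition Eb :: "nat \<Rightarrow> nat \<Rightarrow> nat \<Rightarrow> int" where
  "Eb k i j = (\<Sum>t\<le>j. (-1)^(j-t) * int (j choose t) * cnt k i j t)"

lemma Eb0: "i \<le> k \<Longrightarrow> Eb k i 0 = int (k choose i)^2"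
  by (simp add: Eb_def cnt_def power2_eq_square binomial_symmetric[of i k])

lemma Eb01: assumes "1 \<le> i" "i < k"
  shows "Eb k i 0 - Eb k i 1 = 2 * int (k choose i) * int ((k-1) choose i)"
proof -
  have s1: "(k - Suc 0) choose (k - Suc i) = (k - Suc 0) choose i"
    using binomial_symmetric[of i "k-1"] assms by (simp add: diff_diff_add add.commute)
  have s2: "(k - Suc 0) choose (k-i) = (k - Suc 0) choose (i - Suc 0)"
    using binomial_symmetric[of "i-1" "k-1"] assms by simp
  have e1: "Eb k i 1 = int ((k-1) choose (i-1))^2 - int ((k-1) choose i)^2"
    using assms by (simp add: Eb_def cnt_def s1 s2 power2_eq_square atMost_Suc)
  have pas: "k choose i = ((k-1) choose (i-1)) + ((k-1) choose i)"
    using assms by (metis Suc_diff_1 binomial_Suc_Suc less_le_trans zero_less_one le_less_trans less_imp_le_nat Suc_le_eq)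
  show ?thesis unfolding e1 Eb0[OF less_imp_le[OF assms(2)]] pas by (simp add: power2_eq_square algebra_simps)
qed

lemma alt_sum_zero: "j \<ge> 1 \<Longrightarrow> (\<Sum>t\<le>j. (-1::int)^(j-t) * int (j choose t)) = 0"
proof -
  assume j: "j \<ge> 1"
  have "(\<Sum>t\<le>j. (-1::int)^(j-t) * int (j choose t)) = (1 + (-1::int))^j"
    using binomial_ring[of "1::int" "-1" j] by (simp add: mult.commute)
  also have "\<dots> = 0" using j by simp
  finally show ?thesis .
qed

lemma odd_sq_mod4: "odd (c::nat) \<Longrightarrow> (4::int) dvd (int c)^2 - 1"
proof -
  assume "odd c"
  then obtain a where "c = 2*a+1" by (rule oddE)
  hence "(int c)^2 - 1 = 4 * (int a^2 + int a)" by (simp add: power2_eq_square algebra_simps)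
  thus ?thesis by simp
qed

lemma even_sq_mod4: "even (c::nat) \<Longrightarrow> (4::int) dvd (int c)^2"
proof -
  assume "even c"
  then obtain a where "c = 2*a" by blast
  hence "(int c)^2 = 4 * (int a^2)" by (simp add: power2_eq_square algebra_simps)
  thus ?thesis by simp
qed

lemma Ebj_mod4:
  assumes j2: "2 \<le> j" and ji: "j \<le> i" and jki: "j - 1 \<le> k - i" and ik: "i < k"
    and ev: "even ((k-j) choose i)" and od: "\<forall>t. 1 \<le> t \<and> t \<le> j \<longrightarrow> odd ((k-j) choose (i-t))"
  shows "(4::int) dvd (Eb k i j + (-1)^j)"
proof -
  define d where "d t = cnt k i j t - (if t = 0 then 0 else 1)" for t
  have d4: "(4::int) dvd d t" if t: "t \<le> j" for t
  proof (cases "t = 0")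
    case True
    show ?thesis
    proof (cases "j \<le> k - i")
      case False then show ?thesis using True by (simp add: d_def cnt_def)
    next
      case jk: True
      have "(k-i)-j = (k-j) - i" using jk by simp
      moreover have "(k-j) choose ((k-j) - i) = (k-j) choose i"
        using jk ik by (intro binomial_symmetric[symmetric]) arith
      ultimately have "cnt k i j t = (int ((k-j) choose i))^2"
        using True jk by (simp add: cnt_def power2_eq_square)
      then show ?thesis using True even_sq_mod4[OF ev] by (simp add: d_def)
    qed
  next
    case False
    hence t1: "1 \<le> t" by simp
    have g: "t \<le> i \<and> j - t \<le> k - i" using t ji jki t1 by simp
    have "(k-i)-(j-t) = (k-j) - (i-t)" using g t ik by simp
    moreover have "(k-j) choose ((k-j) - (i-t)) = (k-j) choose (i-t)"
      using g t ik by (intro binomial_symmetric[symmetric]) arith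
    ultimately have "cnt k i j t = (int ((k-j) choose (i-t)))^2"
      using g by (simp add: cnt_def power2_eq_square)
    then show ?thesis using False odd_sq_mod4 od t1 t by (simp add: d_def)
  qed
  have "Eb k i j = (\<Sum>t\<le>j. (-1)^(j-t) * int (j choose t) * d t)
      + (\<Sum>t\<le>j. (-1)^(j-t) * int (j choose t) * (if t = 0 then 0 else 1))"
    unfolding Eb_def sum.distrib[symmetric] by (rule sum.cong) (auto simp: d_def algebra_simps)
  also have "(\<Sum>t\<le>j. (-1::int)^(j-t) * int (j choose t) * (if t = 0 then 0 else 1))
      = (\<Sum>t\<le>j. (-1::int)^(j-t) * int (j choose t)) - (-1)^j"
  proof -
    have "(\<Sum>t\<le>j. (-1::int)^(j-t) * int (j choose t)) = (\<Sum>t\<le>j. (-1::int)^(j-t) * int (j choose t) * (if t = 0 then 0 else 1)) + (\<Sum>t\<le>j. (-1::int)^(j-t) * int (j choose t) * (if t = 0 then 1 else 0))"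
      unfolding sum.distrib[symmetric] by (rule sum.cong) auto
    moreover have "(\<Sum>t\<le>j. (-1::int)^(j-t) * int (j choose t) * (if t = 0 then 1 else 0)) = (-1)^j"
      by (simp add: if_distrib[of "\<lambda>x. _ * x"] sum.delta cong: if_cong)
    ultimately show ?thesis by simp
  qed
  also have "\<dots> = - ((-1::int)^j)" using alt_sum_zero j2 by simp
  finally have "Eb k i j + (-1)^j = (\<Sum>t\<le>j. (-1)^(j-t) * int (j choose t) * d t)" by simp
  also have "(4::int) dvd \<dots>" by (rule dvd_sum) (simp add: d4)
  finally show ?thesis .
qed

lemma expi_1: "exp (\<i> * complex_of_real x) = 1 \<Longrightarrow> \<exists>n::int. x = of_int n * 2 * pi"
proof -
  assume "exp (\<i> * complex_of_real x) = 1"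
  hence "Re (exp (\<i> * complex_of_real x)) = 1" by simp
  hence "cos x = 1" by (simp add: Re_exp)
  thus ?thesis by (simp add: cos_one_2pi_int)
qed

lemma expi_m1: "exp (\<i> * complex_of_real x) = -1 \<Longrightarrow> \<exists>n::int. x = (2 * of_int n + 1) * pi"
proof -
  assume h: "exp (\<i> * complex_of_real x) = -1"
  have "exp (\<i> * complex_of_real (x + pi)) = exp (\<i> * complex_of_real x) * exp (\<i> * complex_of_real pi)"
    by (simp add: distrib_left exp_add)
  also have "\<dots> = 1" using h by simp
  finally obtain n :: int where "x + pi = of_int n * 2 * pi" using expi_1 by blast
  hence "x = (2 * of_int (n - 1) + 1) * pi" by (simp add: algebra_simps)
  thus ?thesis by blast
qed

lemma expi_pm: assumes "exp (\<i> * complex_of_real x) = (-1)^j"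
  shows "\<exists>n::int. x = (2 * of_int n + of_nat (j mod 2)) * pi"
proof (cases "even j")
  case True
  hence "exp (\<i> * complex_of_real x) = 1" using assms by simp
  then obtain n :: int where "x = of_int n * 2 * pi" using expi_1 by blast
  hence "x = (2 * of_int n + of_nat (j mod 2)) * pi" using True by simp
  thus ?thesis by blast
next
  case False
  hence "exp (\<i> * complex_of_real x) = -1" using assms by simp
  then obtain n :: int where "x = (2 * of_int n + 1) * pi" using expi_m1 by blast
  hence "x = (2 * of_int n + of_nat (j mod 2)) * pi" using False by (simp add: odd_iff_mod_2_eq_one)
  thus ?thesis by blast
qed

lemma exp_ratio: assumes "exp (\<i> * complex_of_real t * of_int a) = \<gamma>"
  "exp (\<i> * complex_of_real t * of_int b) = c * \<gamma>" "c \<noteq> 0"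
  shows "exp (\<i> * complex_of_real (t * of_int (a - b))) = 1 / c"
proof -
  have g: "\<gamma> \<noteq> 0" using assms(1) exp_not_eq_zero by metis
  have "\<i> * complex_of_real (t * of_int (a - b)) = \<i> * complex_of_real t * of_int a - \<i> * complex_of_real t * of_int b"
    by (simp add: algebra_simps)
  hence "exp (\<i> * complex_of_real (t * of_int (a - b))) = \<gamma> / (c * \<gamma>)"
    by (simp add: exp_diff assms(1,2))
  thus ?thesis using g by simp
qed

lemma final_contra:
  fixes \<tau> :: real and a0 a1 aj m :: int and \<gamma> :: complex and j :: nat
  assumes h0: "exp (\<i> * complex_of_real \<tau> * of_int a0) = \<gamma>"
    and h1: "exp (\<i> * complex_of_real \<tau> * of_int a1) = (-1) * \<gamma>"
    and hj: "exp (\<i> * complex_of_real \<tau> * of_int aj) = (-1)^j * \<gamma>"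
    and d1: "a0 - a1 = 2*m" and om: "odd m"
    and dj: "4 dvd (aj + (-1)^j)" and a04: "4 dvd (a0 - 1)"
  shows False
proof -
  have "exp (\<i> * complex_of_real (\<tau> * of_int (a0 - a1))) = 1 / (-1)"
    by (rule exp_ratio[OF h0 h1]) simp
  hence "exp (\<i> * complex_of_real (\<tau> * of_int (a0 - a1))) = (-1)^1" by simp
  then obtain n1 :: int where n1: "\<tau> * of_int (a0 - a1) = (2 * of_int n1 + 1) * pi"
    using expi_pm[of _ 1] by fastforce
  have "exp (\<i> * complex_of_real (\<tau> * of_int (a0 - aj))) = 1 / (-1)^j"
    by (rule exp_ratio[OF h0 hj]) simp
  hence "exp (\<i> * complex_of_real (\<tau> * of_int (a0 - aj))) = (-1)^j"
    by (cases "even j") auto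
  then obtain nj :: int where nj: "\<tau> * of_int (a0 - aj) = (2 * of_int nj + of_nat (j mod 2)) * pi"
    using expi_pm by blast
  define D where "D = a0 - aj"
  have "(2 * of_int n1 + 1) * pi * of_int D = \<tau> * of_int (a0 - a1) * of_int D"
    using n1 by simp
  also have "\<dots> = of_int (a0 - a1) * (\<tau> * of_int D)" by simp
  also have "\<dots> = of_int (a0 - a1) * ((2 * of_int nj + of_nat (j mod 2)) * pi)" using nj D_def by simp
  finally have "pi * real_of_int ((2*n1+1) * D) = pi * real_of_int ((a0 - a1) * (2 * nj + int (j mod 2)))"
    by (simp add: algebra_simps)
  hence "real_of_int ((2*n1+1) * D) = real_of_int ((a0 - a1) * (2 * nj + int (j mod 2)))"
    by simp
  hence eq: "(2*n1+1) * D = 2 * m * (2 * nj + int (j mod 2))"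
    unfolding of_int_eq_iff d1 .
  show False
  proof (cases "even j")
    case True
    hence "4 dvd (aj + 1)" using dj by simp
    then obtain y where y: "aj + 1 = 4*y" by (elim dvdE)
    obtain x where x: "a0 - 1 = 4*x" using a04 by (elim dvdE)
    have "D = 4*(x-y) + 2" using x y unfolding D_def by (simp add: algebra_simps)
    then obtain w where "D = 4*w + 2" by blast
    hence "2 * (2*n1+1) = 4 * (m * nj - (2*n1+1)*w)" using eq True by (simp add: algebra_simps)
    hence "even (2*n1+1)" by presburger
    thus False by simp
  next
    case False
    hence "4 dvd (aj - 1)" using dj by simp
    then obtain y where y: "aj - 1 = 4*y" by (elim dvdE)
    obtain x where x: "a0 - 1 = 4*x" using a04 by (elim dvdE)
    have "D = 4*(x-y)" using x y unfolding D_def by (simp add: algebra_simps)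
    then obtain w where "D = 4*w" by blast
    hence "m * (2*nj+1) = 2 * ((2*n1+1)*w)" using eq False by (simp add: algebra_simps odd_iff_mod_2_eq_one)
    hence "even (m * (2*nj+1))" by simp
    thus False using om by simp
  qed
qed




definition ind :: "bool \<Rightarrow> int" where "ind b = (if b then 1 else 0)"

definition xv :: "(nat \<Rightarrow> nat) \<Rightarrow> (nat \<Rightarrow> nat) \<Rightarrow> nat \<Rightarrow> nat set \<Rightarrow> int" where
  "xv a b j C = (\<Prod>l<j. ind (a l \<in> C) - ind (b l \<in> C))"

definition adj :: "nat \<Rightarrow> nat set \<Rightarrow> nat set \<Rightarrow> int" where
  "adj i B C = (if card (B \<inter> C) = i then 1 else 0)"

definition TT :: "(nat \<Rightarrow> nat) \<Rightarrow> (nat \<Rightarrow> nat) \<Rightarrow> nat \<Rightarrow> nat set \<Rightarrow> nat set" where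
  "TT a b j S = a ` S \<union> b ` ({..<j} - S)"

lemma sum_pow_card: "(\<Sum>S\<in>Pow {..<j}. f (card S)) = (\<Sum>t\<le>j. of_nat (j choose t) * f t)"
proof -
  have "(\<Sum>S\<in>Pow {..<j}. f (card S)) = (\<Sum>t\<le>j. \<Sum>S\<in>{S. S \<in> Pow {..<j} \<and> card S = t}. f (card S))"
    by (rule sum.group[symmetric]) (auto simp: card_mono[of "{..<j}", simplified])
  also have "\<dots> = (\<Sum>t\<le>j. of_nat (j choose t) * f t)"
  proof (rule sum.cong[OF refl])
    fix t
    have "(\<Sum>S\<in>{S. S \<in> Pow {..<j} \<and> card S = t}. f (card S)) = (\<Sum>S\<in>{S. S \<subseteq> {..<j} \<and> card S = t}. f t)"
      by (rule sum.cong) auto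
    also have "\<dots> = of_nat (j choose t) * f t" using n_subsets[of "{..<j}" t] by simp
    finally show "(\<Sum>S\<in>{S. S \<in> Pow {..<j} \<and> card S = t}. f (card S)) = of_nat (j choose t) * f t" .
  qed
  finally show ?thesis .
qed

lemma finite_JV: "finite (J_vertices n k)"
proof -
  have "J_vertices n k \<subseteq> Pow {1..n}" by (auto simp: J_vertices_def)
  thus ?thesis by (rule finite_subset) simp
qed

lemma sum_ind_card: "finite A \<Longrightarrow> (\<Sum>C\<in>A. (if P C then (1::int) else 0)) = int (card {C\<in>A. P C})"
  by (simp add: sum.inter_filter[symmetric])

lemma setlem1: "X \<subseteq> X0 \<Longrightarrow> Y \<subseteq> Y0 \<Longrightarrow> X0 \<inter> Y0 = {} \<Longrightarrow> X0 \<inter> P = {} \<Longrightarrow> T \<subseteq> P \<Longrightarrow> (X \<union> Y \<union> T) \<inter> X0 = X"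
  by blast
lemma setlem2: "X \<subseteq> X0 \<Longrightarrow> Y \<subseteq> Y0 \<Longrightarrow> X0 \<inter> Y0 = {} \<Longrightarrow> Y0 \<inter> P = {} \<Longrightarrow> T \<subseteq> P \<Longrightarrow> (X \<union> Y \<union> T) \<inter> Y0 = Y"
  by blast
lemma setlem3: "X \<subseteq> X0 \<Longrightarrow> Y \<subseteq> Y0 \<Longrightarrow> X0 \<inter> P = {} \<Longrightarrow> Y0 \<inter> P = {} \<Longrightarrow> T \<subseteq> P \<Longrightarrow> (X \<union> Y \<union> T) \<inter> P = T"
  by blast
lemma setlem4: "X \<subseteq> X0 \<Longrightarrow> Y \<subseteq> Y0 \<Longrightarrow> X0 \<subseteq> U \<Longrightarrow> Y0 \<subseteq> U \<Longrightarrow> T \<subseteq> U \<Longrightarrow> X \<union> Y \<union> T \<subseteq> U"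
  by blast

locale pairs =
  fixes a b :: "nat \<Rightarrow> nat" and j :: nat
  assumes inja: "inj_on a {..<j}" and injb: "inj_on b {..<j}"
    and disj: "a ` {..<j} \<inter> b ` {..<j} = {}"
begin

abbreviation L where "L \<equiv> {..<j}"
abbreviation PP where "PP \<equiv> a ` L \<union> b ` L"

lemma a_in_T: "l \<in> L \<Longrightarrow> S \<subseteq> L \<Longrightarrow> a l \<in> TT a b j S \<longleftrightarrow> l \<in> S"
  using inja disj unfolding TT_def by (auto dest: inj_onD)

lemma b_in_T: "l \<in> L \<Longrightarrow> S \<subseteq> L \<Longrightarrow> b l \<in> TT a b j S \<longleftrightarrow> l \<notin> S"
  using injb disj unfolding TT_def by (auto dest: inj_onD)

lemma T_sub: "S \<subseteq> L \<Longrightarrow> TT a b j S \<subseteq> PP"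
  unfolding TT_def by auto

lemma xv_expand: "xv a b j C = (\<Sum>S\<in>Pow L. (-1)^(j - card S) * ind (C \<inter> PP = TT a b j S))"
proof -
  define SC where "SC = {l\<in>L. a l \<in> C}"
  have SCL: "SC \<subseteq> L" by (auto simp: SC_def)
  have uniq: "S \<in> Pow L \<Longrightarrow> C \<inter> PP = TT a b j S \<Longrightarrow> S = SC" for S
  proof -
    assume S: "S \<in> Pow L" and e: "C \<inter> PP = TT a b j S"
    show "S = SC"
    proof
      show "S \<subseteq> SC" using S e a_in_T[of _ S] unfolding SC_def by blast
      show "SC \<subseteq> S"
      proof
        fix l assume l: "l \<in> SC"
        hence "a l \<in> C \<inter> PP" "l \<in> L" by (auto simp: SC_def)
        thus "l \<in> S" using e a_in_T[of l S] S by auto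
      qed
    qed
  qed
  have rhs: "(\<Sum>S\<in>Pow L. (-1)^(j - card S) * ind (C \<inter> PP = TT a b j S))
      = (if C \<inter> PP = TT a b j SC then (-1)^(j - card SC) else 0)"
  proof -
    have "(\<Sum>S\<in>Pow L. (-1)^(j - card S) * ind (C \<inter> PP = TT a b j S))
        = (\<Sum>S\<in>Pow L. if S = SC then (if C \<inter> PP = TT a b j SC then (-1)^(j - card SC) else 0) else 0)"
    proof (rule sum.cong[OF refl])
      fix S assume S: "S \<in> Pow L"
      show "(-1)^(j - card S) * ind (C \<inter> PP = TT a b j S) = (if S = SC then (if C \<inter> PP = TT a b j SC then (-1)^(j - card SC) else 0) else 0)"
      proof (cases "S = SC")
        case True then show ?thesis by (simp add: ind_def)
      next
        case False
        hence "C \<inter> PP \<noteq> TT a b j S" using uniq S by blast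
        then show ?thesis using False by (simp add: ind_def)
      qed
    qed
    also have "\<dots> = (if C \<inter> PP = TT a b j SC then (-1)^(j - card SC) else 0)"
      using SCL by (simp add: sum.delta)
    finally show ?thesis .
  qed
  show ?thesis
  proof (cases "C \<inter> PP = TT a b j SC")
    case True
    have f: "ind (a l \<in> C) - ind (b l \<in> C) = (if l \<in> SC then 1 else -1)" if l: "l \<in> L" for l
    proof (cases "l \<in> SC")
      case True
      have "b l \<notin> TT a b j SC" using b_in_T[OF l SCL] True by simp
      hence "b l \<notin> C" using \<open>C \<inter> PP = TT a b j SC\<close> l by blast
      then show ?thesis using True by (simp add: ind_def SC_def)
    next
      case False
      have "b l \<in> TT a b j SC" using b_in_T[OF l SCL] False by simp
      hence "b l \<in> C" using \<open>C \<inter> PP = TT a b j SC\<close> by blast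
      then show ?thesis using False l by (simp add: ind_def SC_def)
    qed
    have "xv a b j C = (\<Prod>l\<in>L. if l \<in> SC then 1 else -1)"
      unfolding xv_def by (rule prod.cong) (auto simp: f)
    also have "\<dots> = (-1)^card (L - SC)"
      by (simp add: prod.If_cases Int_absorb1[OF SCL] Diff_eq[symmetric] Compl_eq_Diff_UNIV)
         (simp add: Diff_eq)
    also have "card (L - SC) = j - card SC" using SCL by (simp add: card_Diff_subset finite_subset)
    finally show ?thesis using rhs True by simp
  next
    case False
    have "\<exists>l\<in>L. ind (a l \<in> C) - ind (b l \<in> C) = 0"
    proof (rule ccontr)
      assume "\<not> (\<exists>l\<in>L. ind (a l \<in> C) - ind (b l \<in> C) = 0)"
      hence ne: "\<forall>l\<in>L. (a l \<in> C) \<noteq> (b l \<in> C)" by (auto simp: ind_def split: if_splits)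
      have "C \<inter> PP = TT a b j SC"
      proof
        show "C \<inter> PP \<subseteq> TT a b j SC"
        proof
          fix x assume x: "x \<in> C \<inter> PP"
          then obtain l where l: "l \<in> L" "x = a l \<or> x = b l" by auto
          show "x \<in> TT a b j SC"
          proof (cases "x = a l")
            case True then show ?thesis using x l a_in_T[OF l(1) SCL] by (auto simp: SC_def)
          next
            case False
            hence "x = b l" using l by simp
            hence "a l \<notin> C" using ne l x by auto
            then show ?thesis using \<open>x = b l\<close> b_in_T[OF l(1) SCL] by (auto simp: SC_def)
          qed
        qed
        show "TT a b j SC \<subseteq> C \<inter> PP"
        proof
          fix x assume x: "x \<in> TT a b j SC"
          then consider l where "l \<in> SC" "x = a l" | l where "l \<in> L - SC" "x = b l" unfolding TT_def by auto
          then show "x \<in> C \<inter> PP"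
          proof cases
            case 1 then show ?thesis by (auto simp: SC_def)
          next
            case 2 then show ?thesis using ne by (auto simp: SC_def)
          qed
        qed
      qed
      with False show False by simp
    qed
    hence "xv a b j C = 0" unfolding xv_def by (intro prod_zero) auto
    then show ?thesis using rhs False by simp
  qed
qed

lemma count_T:
  assumes Bsub: "B \<subseteq> {1..2*k}" and cB: "card B = k" and aB: "a ` L \<subseteq> B"
    and bB: "b ` L \<subseteq> {1..2*k} - B" and S: "S \<subseteq> L" and ik: "i \<le> k"
  shows "int (card {C. C \<subseteq> {1..2*k} \<and> card C = k \<and> card (B \<inter> C) = i \<and> C \<inter> PP = TT a b j S})
         = cnt k i j (card S)"
proof -
  define U where "U = {1..2*k}"
  define X0 where "X0 = B - a ` L"
  define Y0 where "Y0 = U - B - b ` L"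
  define T where "T = TT a b j S"
  define t where "t = card S"
  define Z where "Z = {C. C \<subseteq> U \<and> card C = k \<and> card (B \<inter> C) = i \<and> C \<inter> PP = T}"
  have finU: "finite U" by (simp add: U_def)
  have finB: "finite B" using Bsub finite_subset by blast
  have cU: "card U = 2*k" by (simp add: U_def)
  have finS: "finite S" using finite_subset[OF S] by simp
  have finaS: "finite (a ` S)" using finS by simp
  have tj: "t \<le> j" unfolding t_def using card_mono[OF _ S] by simp
  have TB: "T \<inter> B = a ` S" using S aB bB unfolding T_def TT_def by blast
  have TnB: "T - B = b ` (L - S)" using S aB bB unfolding T_def TT_def by blast
  have caS: "card (a ` S) = t" unfolding t_def by (rule card_image) (rule inj_on_subset[OF inja S])
  have cbS: "card (b ` (L - S)) = j - t"
  proof -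
    have "card (b ` (L - S)) = card (L - S)" by (rule card_image) (rule inj_on_subset[OF injb], blast)
    also have "\<dots> = j - t" using S by (simp add: card_Diff_subset finite_subset t_def)
    finally show ?thesis .
  qed
  have cT: "card T = j"
  proof -
    have "a ` S \<inter> b ` (L - S) = {}" using disj S by blast
    hence "card T = card (a ` S) + card (b ` (L - S))" unfolding T_def TT_def
      by (intro card_Un_disjoint) (use finaS in auto)
    thus ?thesis using caS cbS tj by simp
  qed
  have caL: "card (a ` L) = j" using card_image[OF inja] by simp
  have cbL: "card (b ` L) = j" using card_image[OF injb] by simp
  have cX0: "card X0 = k - j" unfolding X0_def using card_Diff_subset[OF _ aB] caL cB by simp
  have cY0: "card Y0 = k - j"
  proof -
    have "card (U - B) = k" using card_Diff_subset[OF finB] Bsub cU cB unfolding U_def by simp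
    moreover have "b ` L \<subseteq> U - B" using bB unfolding U_def by simp
    ultimately show ?thesis unfolding Y0_def using card_Diff_subset[of "b ` L" "U - B"] cbL by simp
  qed
  have finX0: "finite X0" using finB by (simp add: X0_def)
  have finY0: "finite Y0" using finU by (simp add: Y0_def)
  have finT: "finite T" unfolding T_def TT_def using finaS by simp
  have TP: "T \<subseteq> PP" unfolding T_def using T_sub[OF S] .
  have X0P: "X0 \<inter> PP = {}" using bB unfolding X0_def by blast
  have Y0P: "Y0 \<inter> PP = {}" using aB unfolding Y0_def by blast
  have X0Y0: "X0 \<inter> Y0 = {}" unfolding X0_def Y0_def by blast
  have UXY: "U = X0 \<union> Y0 \<union> PP" using aB bB Bsub unfolding X0_def Y0_def U_def by blast
  have X0U: "X0 \<subseteq> U" "Y0 \<subseteq> U" "T \<subseteq> U" using Bsub TP UXY unfolding X0_def Y0_def U_def by auto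
  have BC: "B \<inter> C = (C \<inter> X0) \<union> a ` S" if C: "C \<subseteq> U" "C \<inter> PP = T" for C
    using C TB X0P TP unfolding X0_def by blast
  have cBC: "card (B \<inter> C) = card (C \<inter> X0) + t" if C: "C \<subseteq> U" "C \<inter> PP = T" for C
  proof -
    have "card (B \<inter> C) = card (C \<inter> X0) + card (a ` S)" unfolding BC[OF C]
    proof (rule card_Un_disjoint)
      show "finite (C \<inter> X0)" using finX0 by simp
      show "finite (a ` S)" by (rule finaS)
      show "C \<inter> X0 \<inter> a ` S = {}" using X0P S by blast
    qed
    thus ?thesis using caS by simp
  qed
  have Cdec: "C = (C \<inter> X0) \<union> (C \<inter> Y0) \<union> T" if C: "C \<subseteq> U" "C \<inter> PP = T" for C
    using C UXY by blast
  have cC: "card C = card (C \<inter> X0) + card (C \<inter> Y0) + j" if C: "C \<subseteq> U" "C \<inter> PP = T" for C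
  proof -
    have "card C = card ((C \<inter> X0) \<union> (C \<inter> Y0)) + card T"
      by (subst Cdec[OF C], rule card_Un_disjoint) (use finX0 finY0 finT X0P Y0P TP in auto)
    also have "card ((C \<inter> X0) \<union> (C \<inter> Y0)) = card (C \<inter> X0) + card (C \<inter> Y0)"
      by (rule card_Un_disjoint) (use finX0 finY0 X0Y0 in auto)
    finally show ?thesis using cT by simp
  qed
  have cardZ: "card Z = (if t \<le> i \<and> j - t \<le> k - i then ((k-j) choose (i-t)) * ((k-j) choose ((k-i)-(j-t))) else 0)"
  proof (cases "t \<le> i \<and> j - t \<le> k - i")
    case False
    have "Z = {}"
    proof (rule ccontr)
      assume "Z \<noteq> {}"
      then obtain C where C: "C \<in> Z" by blast
      hence C1: "C \<subseteq> U" "C \<inter> PP = T" "card C = k" "card (B \<inter> C) = i" by (auto simp: Z_def)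
      have "card (C \<inter> Y0) \<le> k - j" using card_mono[OF finY0, of "C \<inter> Y0"] cY0 by auto
      thus False using False cBC[OF C1(1,2)] cC[OF C1(1,2)] C1(3,4) tj by linarith
    qed
    then show ?thesis by (subst if_not_P[OF False]) simp
  next
    case True
    define XS where "XS = {X. X \<subseteq> X0 \<and> card X = i - t}"
    define YS where "YS = {Y. Y \<subseteq> Y0 \<and> card Y = (k-i)-(j-t)}"
    have "bij_betw (\<lambda>C. (C \<inter> X0, C \<inter> Y0)) Z (XS \<times> YS)"
    proof (rule bij_betw_byWitness[where f'="\<lambda>(X,Y). X \<union> Y \<union> T"])
      show "\<forall>C\<in>Z. (\<lambda>(X,Y). X \<union> Y \<union> T) (C \<inter> X0, C \<inter> Y0) = C"
      proof
        fix C assume "C \<in> Z"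
        hence "C \<subseteq> U" "C \<inter> PP = T" by (auto simp: Z_def)
        from Cdec[OF this] show "(\<lambda>(X,Y). X \<union> Y \<union> T) (C \<inter> X0, C \<inter> Y0) = C" by simp
      qed
      show "\<forall>p\<in>XS \<times> YS. (\<lambda>C. (C \<inter> X0, C \<inter> Y0)) ((\<lambda>(X,Y). X \<union> Y \<union> T) p) = p"
      proof
        fix p assume "p \<in> XS \<times> YS"
        then obtain X Y where p: "p = (X,Y)" "X \<subseteq> X0" "Y \<subseteq> Y0" by (auto simp: XS_def YS_def)
        have "(X \<union> Y \<union> T) \<inter> X0 = X" using setlem1[OF p(2,3) X0Y0 X0P TP] .
        moreover have "(X \<union> Y \<union> T) \<inter> Y0 = Y" using setlem2[OF p(2,3) X0Y0 Y0P TP] .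
        ultimately show "(\<lambda>C. (C \<inter> X0, C \<inter> Y0)) ((\<lambda>(X,Y). X \<union> Y \<union> T) p) = p" using p by simp
      qed
      show "(\<lambda>C. (C \<inter> X0, C \<inter> Y0)) ` Z \<subseteq> XS \<times> YS"
      proof safe
        fix C assume "C \<in> Z"
        hence C1: "C \<subseteq> U" "C \<inter> PP = T" "card C = k" "card (B \<inter> C) = i" by (auto simp: Z_def)
        show "(C \<inter> X0) \<in> XS" using cBC[OF C1(1,2)] C1 by (auto simp: XS_def)
        show "(C \<inter> Y0) \<in> YS" using cBC[OF C1(1,2)] cC[OF C1(1,2)] C1 True tj by (auto simp: YS_def)
      qed
      show "(\<lambda>(X,Y). X \<union> Y \<union> T) ` (XS \<times> YS) \<subseteq> Z"
      proof safe
        fix X Y assume X: "X \<in> XS" and Y: "Y \<in> YS"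
        have X1: "X \<subseteq> X0" "card X = i - t" using X by (auto simp: XS_def)
        have Y1: "Y \<subseteq> Y0" "card Y = (k-i)-(j-t)" using Y by (auto simp: YS_def)
        define C where "C = X \<union> Y \<union> T"
        have CU: "C \<subseteq> U" unfolding C_def using setlem4[OF X1(1) Y1(1) X0U] .
        have CP: "C \<inter> PP = T" unfolding C_def using setlem3[OF X1(1) Y1(1) X0P Y0P TP] .
        have CX: "C \<inter> X0 = X" unfolding C_def using setlem1[OF X1(1) Y1(1) X0Y0 X0P TP] .
        have CY: "C \<inter> Y0 = Y" unfolding C_def using setlem2[OF X1(1) Y1(1) X0Y0 Y0P TP] .
        have "card C = (i - t) + ((k-i)-(j-t)) + j" using cC[OF CU CP] CX CY X1 Y1 by simp
        hence "card C = k" using True tj ik by linarith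
        moreover have "card (B \<inter> C) = i" using cBC[OF CU CP] CX X1 True by simp
        ultimately show "X \<union> Y \<union> T \<in> Z" using CU CP unfolding Z_def C_def by blast
      qed
    qed
    hence "card Z = card (XS \<times> YS)" by (rule bij_betw_same_card)
    also have "\<dots> = card XS * card YS" by (rule card_cartesian_product)
    also have "card XS = (k-j) choose (i-t)" unfolding XS_def using n_subsets[OF finX0] cX0 by simp
    also have "card YS = (k-j) choose ((k-i)-(j-t))" unfolding YS_def using n_subsets[OF finY0] cY0 by simp
    finally show ?thesis using True by simp
  qed
  show ?thesis unfolding cnt_def using cardZ by (simp add: Z_def U_def T_def t_def)
qed

lemma sum_plus:
  assumes Bsub: "B \<subseteq> {1..2*k}" and cB: "card B = k" and aB: "a ` L \<subseteq> B"
    and bB: "b ` L \<subseteq> {1..2*k} - B" and ik: "i \<le> k"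
  shows "(\<Sum>C\<in>J_vertices (2*k) k. adj i B C * xv a b j C) = Eb k i j"
proof -
  let ?V = "J_vertices (2*k) k"
  have "(\<Sum>C\<in>?V. adj i B C * xv a b j C)
      = (\<Sum>C\<in>?V. \<Sum>S\<in>Pow L. (-1)^(j - card S) * (adj i B C * ind (C \<inter> PP = TT a b j S)))"
    by (rule sum.cong[OF refl]) (simp add: xv_expand sum_distrib_left mult_ac)
  also have "\<dots> = (\<Sum>S\<in>Pow L. (-1)^(j - card S) * (\<Sum>C\<in>?V. adj i B C * ind (C \<inter> PP = TT a b j S)))"
    by (subst sum.swap) (simp add: sum_distrib_left)
  also have "\<dots> = (\<Sum>S\<in>Pow L. (-1)^(j - card S) * cnt k i j (card S))"
  proof (rule sum.cong[OF refl])
    fix S assume S: "S \<in> Pow L"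
    have "(\<Sum>C\<in>?V. adj i B C * ind (C \<inter> PP = TT a b j S))
        = (\<Sum>C\<in>?V. if card (B \<inter> C) = i \<and> C \<inter> PP = TT a b j S then 1 else 0)"
      by (rule sum.cong[OF refl]) (simp add: adj_def ind_def)
    also have "\<dots> = int (card {C\<in>?V. card (B \<inter> C) = i \<and> C \<inter> PP = TT a b j S})"
      by (rule sum_ind_card[OF finite_JV])
    also have "{C\<in>?V. card (B \<inter> C) = i \<and> C \<inter> PP = TT a b j S}
        = {C. C \<subseteq> {1..2*k} \<and> card C = k \<and> card (B \<inter> C) = i \<and> C \<inter> PP = TT a b j S}"
      by (auto simp: J_vertices_def)
    also have "int (card \<dots>) = cnt k i j (card S)"
      by (rule count_T[OF Bsub cB aB bB _ ik]) (use S in auto)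
    finally show "(-1)^(j - card S) * (\<Sum>C\<in>?V. adj i B C * ind (C \<inter> PP = TT a b j S))
        = (-1)^(j - card S) * cnt k i j (card S)" by simp
  qed
  also have "\<dots> = (\<Sum>t\<le>j. of_nat (j choose t) * ((-1)^(j - t) * cnt k i j t))"
    by (rule sum_pow_card)
  also have "\<dots> = Eb k i j" unfolding Eb_def by (rule sum.cong) (auto simp: mult_ac)
  finally show ?thesis .
qed

lemma sum_pm:
  assumes Bsub: "B \<subseteq> {1..2*k}" and cB: "card B = k" and aU: "a ` L \<subseteq> {1..2*k}"
    and bU: "b ` L \<subseteq> {1..2*k}" and ik: "i \<le> k" and ne: "\<forall>l\<in>L. (a l \<in> B) \<noteq> (b l \<in> B)"
  shows "(\<Sum>C\<in>J_vertices (2*k) k. adj i B C * xv a b j C) = Eb k i j * xv a b j B"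
proof -
  define a' where "a' l = (if a l \<in> B then a l else b l)" for l
  define b' where "b' l = (if a l \<in> B then b l else a l)" for l
  define s where "s = (\<Prod>l<j. if a l \<in> B then 1 else (-1::int))"
  have a'B: "a' l \<in> B" if "l \<in> L" for l using ne that by (auto simp: a'_def)
  have b'B: "b' l \<notin> B" if "l \<in> L" for l using ne that by (auto simp: b'_def)
  have pr: "pairs a' b' j"
  proof
    show "inj_on a' L"
    proof (rule inj_onI)
      fix x y assume x: "x \<in> L" and y: "y \<in> L" and e: "a' x = a' y"
      show "x = y"
      proof (cases "a x \<in> B"; cases "a y \<in> B")
        assume "a x \<in> B" "a y \<in> B" then show ?thesis using e x y inja by (auto simp: a'_def dest: inj_onD)
      next
        assume "a x \<notin> B" "a y \<notin> B" then show ?thesis using e x y injb by (auto simp: a'_def dest: inj_onD)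
      next
        assume "a x \<in> B" "a y \<notin> B"
        hence "a x = b y" using e by (simp add: a'_def)
        then show ?thesis using disj x y by blast
      next
        assume "a x \<notin> B" "a y \<in> B"
        hence "b x = a y" using e by (simp add: a'_def)
        then show ?thesis using disj x y by blast
      qed
    qed
    show "inj_on b' L"
    proof (rule inj_onI)
      fix x y assume x: "x \<in> L" and y: "y \<in> L" and e: "b' x = b' y"
      show "x = y"
      proof (cases "a x \<in> B"; cases "a y \<in> B")
        assume "a x \<in> B" "a y \<in> B" then show ?thesis using e x y injb by (auto simp: b'_def dest: inj_onD)
      next
        assume "a x \<notin> B" "a y \<notin> B" then show ?thesis using e x y inja by (auto simp: b'_def dest: inj_onD)
      next
        assume "a x \<in> B" "a y \<notin> B"
        hence "b x = a y" using e by (simp add: b'_def)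
        then show ?thesis using disj x y by blast
      next
        assume "a x \<notin> B" "a y \<in> B"
        hence "a x = b y" using e by (simp add: b'_def)
        then show ?thesis using disj x y by blast
      qed
    qed
    show "a' ` L \<inter> b' ` L = {}"
    proof (rule equals0I)
      fix x assume "x \<in> a' ` L \<inter> b' ` L"
      then obtain l1 l2 where "l1 \<in> L" "l2 \<in> L" "x = a' l1" "x = b' l2" by blast
      thus False using a'B b'B by metis
    qed
  qed
  have a'sub: "a' ` L \<subseteq> B" using a'B by (simp add: image_subset_iff)
  have b'sub: "b' ` L \<subseteq> {1..2*k} - B"
  proof
    fix x assume "x \<in> b' ` L"
    then obtain l where l: "l \<in> L" "x = b' l" by blast
    have "x \<in> {1..2*k}" using l aU bU by (auto simp: b'_def)
    thus "x \<in> {1..2*k} - B" using b'B l by blast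
  qed
  have xvrel: "xv a b j C = s * xv a' b' j C" for C
  proof -
    have "xv a b j C = (\<Prod>l<j. (if a l \<in> B then 1 else (-1::int)) * (ind (a' l \<in> C) - ind (b' l \<in> C)))"
      unfolding xv_def by (rule prod.cong) (auto simp: a'_def b'_def)
    also have "\<dots> = s * xv a' b' j C" unfolding s_def xv_def by (rule prod.distrib)
    finally show ?thesis .
  qed
  have xvB: "xv a' b' j B = 1"
    unfolding xv_def by (rule prod.neutral) (use a'B b'B in \<open>auto simp: ind_def\<close>)
  have "(\<Sum>C\<in>J_vertices (2*k) k. adj i B C * xv a b j C) = s * (\<Sum>C\<in>J_vertices (2*k) k. adj i B C * xv a' b' j C)"
    by (simp add: xvrel sum_distrib_left mult_ac)
  also have "(\<Sum>C\<in>J_vertices (2*k) k. adj i B C * xv a' b' j C) = Eb k i j"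
    by (rule pairs.sum_plus[OF pr Bsub cB a'sub b'sub ik])
  finally show ?thesis using xvrel[of B] xvB by simp
qed

lemma sum_eq:
  assumes Bsub: "B \<subseteq> {1..2*k}" and cB: "card B = k" and aU: "a ` L \<subseteq> {1..2*k}"
    and bU: "b ` L \<subseteq> {1..2*k}" and l0: "l0 \<in> L" and eq: "(a l0 \<in> B) = (b l0 \<in> B)"
  shows "(\<Sum>C\<in>J_vertices (2*k) k. adj i B C * xv a b j C) = 0"
proof -
  let ?V = "J_vertices (2*k) k"
  define tr where "tr x = (if x = a l0 then b l0 else if x = b l0 then a l0 else x)" for x
  define sw where "sw C = tr ` C" for C
  have trtr: "tr (tr x) = x" for x by (auto simp: tr_def)
  have injtr: "inj tr" by (metis injI trtr)
  have memsw: "x \<in> sw C \<longleftrightarrow> tr x \<in> C" for x C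
    unfolding sw_def by (metis image_iff trtr)
  have swsw: "sw (sw C) = C" for C by (auto simp: memsw trtr)
  have a0U: "a l0 \<in> {1..2*k}" "b l0 \<in> {1..2*k}" using aU bU l0 by auto
  have swV: "sw C \<in> ?V" if "C \<in> ?V" for C
  proof -
    have "sw C \<subseteq> {1..2*k}" using that a0U unfolding sw_def tr_def J_vertices_def by auto
    moreover have "card (sw C) = card C" unfolding sw_def by (rule card_image) (rule inj_on_subset[OF injtr], simp)
    ultimately show ?thesis using that by (simp add: J_vertices_def)
  qed
  have swB: "sw B = B" using eq by (auto simp: memsw tr_def split: if_splits)
  have adjsw: "adj i B (sw C) = adj i B C" for C
  proof -
    have "sw (B \<inter> C) = sw B \<inter> sw C" unfolding sw_def by (rule image_Int[OF injtr])
    hence "B \<inter> sw C = sw (B \<inter> C)" using swB by simp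
    moreover have "card (sw (B \<inter> C)) = card (B \<inter> C)" unfolding sw_def by (rule card_image) (rule inj_on_subset[OF injtr], simp)
    ultimately show ?thesis by (simp add: adj_def)
  qed
  have xvsw: "xv a b j (sw C) = - xv a b j C" for C
  proof -
    have oth: "ind (a l \<in> sw C) - ind (b l \<in> sw C) = ind (a l \<in> C) - ind (b l \<in> C)" if l: "l \<in> L - {l0}" for l
    proof -
      have "a l \<noteq> a l0" "a l \<noteq> b l0" "b l \<noteq> a l0" "b l \<noteq> b l0"
        using l l0 inja injb disj by (auto dest: inj_onD)
      hence "tr (a l) = a l" "tr (b l) = b l" by (auto simp: tr_def)
      thus ?thesis by (simp add: memsw)
    qed
    have ab0: "a l0 \<noteq> b l0" using l0 disj by blast
    have f0: "ind (a l0 \<in> sw C) - ind (b l0 \<in> sw C) = - (ind (a l0 \<in> C) - ind (b l0 \<in> C))"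
      using ab0 by (simp add: memsw tr_def)
    have "xv a b j (sw C) = (ind (a l0 \<in> sw C) - ind (b l0 \<in> sw C)) * (\<Prod>l\<in>L-{l0}. ind (a l \<in> sw C) - ind (b l \<in> sw C))"
      unfolding xv_def using l0 by (simp add: prod.remove)
    also have "\<dots> = - (ind (a l0 \<in> C) - ind (b l0 \<in> C)) * (\<Prod>l\<in>L-{l0}. ind (a l \<in> C) - ind (b l \<in> C))"
      by (simp only: f0 prod.cong[OF refl oth])
    also have "\<dots> = - xv a b j C"
      unfolding xv_def using l0 by (simp add: prod.remove algebra_simps)
    finally show ?thesis .
  qed
  have bij: "bij_betw sw ?V ?V" by (rule bij_betw_byWitness[where f'=sw]) (auto simp: swsw swV)
  have "(\<Sum>C\<in>?V. adj i B C * xv a b j C) = (\<Sum>C\<in>?V. adj i B (sw C) * xv a b j (sw C))"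
    by (rule sum.reindex_bij_betw[OF bij, symmetric])
  also have "\<dots> = - (\<Sum>C\<in>?V. adj i B C * xv a b j C)"
    by (simp add: adjsw xvsw sum_negf)
  finally show ?thesis by simp
qed

lemma eigen:
  assumes aU: "a ` L \<subseteq> {1..2*k}" and bU: "b ` L \<subseteq> {1..2*k}" and ik: "i \<le> k"
    and B: "B \<in> J_vertices (2*k) k"
  shows "(\<Sum>C\<in>J_vertices (2*k) k. adj i B C * xv a b j C) = Eb k i j * xv a b j B"
proof -
  have Bsub: "B \<subseteq> {1..2*k}" and cB: "card B = k" using B by (auto simp: J_vertices_def)
  show ?thesis
  proof (cases "\<exists>l0\<in>L. (a l0 \<in> B) = (b l0 \<in> B)")
    case True
    then obtain l0 where l0: "l0 \<in> L" "(a l0 \<in> B) = (b l0 \<in> B)" by blast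
    have "xv a b j B = 0" unfolding xv_def
      by (rule prod_zero) (use l0 in \<open>auto simp: ind_def\<close>)
    then show ?thesis using sum_eq[OF Bsub cB aU bU l0] by simp
  next
    case False
    then show ?thesis using sum_pm[OF Bsub cB aU bU ik] by blast
  qed
qed

end



lemma rsg_J: "rsg (J_vertices n k) (J_adj i)"
proof
  show "finite (J_vertices n k)" by (rule finite_JV)
  show "J_adj i u w = J_adj i w u" for u w by (simp add: J_adj_def Int_commute)
  show "cnj (J_adj i u w) = J_adj i u w" for u w by (simp add: J_adj_def)
  show "cmod (J_adj i u w) \<le> 1" for u w by (simp add: J_adj_def)
qed

lemma J_adj_adj: "J_adj i B C = of_int (adj i B C)"
  by (simp add: J_adj_def adj_def)

lemma pst_pairs:
  assumes pr: "pairs a b j" and au: "a ` {..<j} \<subseteq> u" and bu: "b ` {..<j} \<subseteq> {1..2*k} - u"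
    and u: "u \<in> J_vertices (2*k) k" and v: "v \<in> J_vertices (2*k) k" and ik: "i \<le> k"
    and h: "cmod (transition (J_vertices (2*k) k) (J_adj i) \<tau> u v) = 1"
  shows "transition (J_vertices (2*k) k) (J_adj i) \<tau> u v * of_int (xv a b j v)
       = exp (\<i> * complex_of_real \<tau> * of_int (Eb k i j))"
proof -
  let ?V = "J_vertices (2*k) k"
  interpret R: rsg ?V "J_adj i" by (rule rsg_J)
  have usub: "u \<subseteq> {1..2*k}" using u by (simp add: J_vertices_def)
  have aU: "a ` {..<j} \<subseteq> {1..2*k}" using au usub by blast
  have bU: "b ` {..<j} \<subseteq> {1..2*k}" using bu by blast
  have eig: "(\<Sum>w\<in>?V. J_adj i y w * complex_of_int (xv a b j w)) = complex_of_int (Eb k i j) * complex_of_int (xv a b j y)"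
    if y: "y \<in> ?V" for y
  proof -
    have "(\<Sum>w\<in>?V. J_adj i y w * complex_of_int (xv a b j w)) = complex_of_int (\<Sum>w\<in>?V. adj i y w * xv a b j w)"
      by (simp only: J_adj_adj of_int_sum of_int_mult)
    also have "(\<Sum>w\<in>?V. adj i y w * xv a b j w) = Eb k i j * xv a b j y"
      by (rule pairs.eigen[OF pr aU bU ik y])
    finally show ?thesis by simp
  qed
  have xu: "xv a b j u = 1"
    unfolding xv_def by (rule prod.neutral) (use au bu in \<open>auto simp: ind_def\<close>)
  have "transition ?V (J_adj i) \<tau> u v * of_int (xv a b j v)
      = exp (\<i> * complex_of_real \<tau> * of_int (Eb k i j)) * of_int (xv a b j u)"
    by (rule R.PST_eig[OF eig u v h])
  thus ?thesis using xu by simp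
qed

lemma get_pairs:
  assumes u: "u \<in> J_vertices (2*k) k" and jk: "j \<le> k"
  shows "\<exists>a b. pairs a b j \<and> a ` {..<j} \<subseteq> u \<and> b ` {..<j} \<subseteq> {1..2*k} - u"
proof -
  have usub: "u \<subseteq> {1..2*k}" and cu: "card u = k" using u by (auto simp: J_vertices_def)
  have fu: "finite u" using usub finite_subset by blast
  have cw: "card ({1..2*k} - u) = k" using card_Diff_subset[OF fu usub] cu by simp
  obtain f where f: "bij_betw f {0..<card u} u" using ex_bij_betw_nat_finite[OF fu] by blast
  obtain g where g: "bij_betw g {0..<card ({1..2*k} - u)} ({1..2*k} - u)"
    using ex_bij_betw_nat_finite[of "{1..2*k} - u"] by auto
  have sub: "{..<j} \<subseteq> {0..<k}" using jk by auto
  have fi0: "inj_on f {0..<k}" using bij_betw_imp_inj_on[OF f] cu by simp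
  have gi0: "inj_on g {0..<k}" using bij_betw_imp_inj_on[OF g] cw by simp
  have fs0: "f ` {0..<k} = u" using bij_betw_imp_surj_on[OF f] cu by simp
  have gs0: "g ` {0..<k} = {1..2*k} - u" using bij_betw_imp_surj_on[OF g] cw by simp
  have fi: "inj_on f {..<j}" by (rule inj_on_subset[OF fi0 sub])
  have gi: "inj_on g {..<j}" by (rule inj_on_subset[OF gi0 sub])
  have fs: "f ` {..<j} \<subseteq> u" using image_mono[OF sub, of f] fs0 by simp
  have gs: "g ` {..<j} \<subseteq> {1..2*k} - u" using image_mono[OF sub, of g] gs0 by simp
  have dis: "f ` {..<j} \<inter> g ` {..<j} = {}" using fs gs by blast
  have "pairs f g j"
    by unfold_locales (rule fi, rule gi, rule dis)
  thus ?thesis using fs gs by blast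
qed

lemma norm_E: "cmod (exp (\<i> * complex_of_real t * of_int x)) = 1"
  by simp

lemma ind_diff_cases: "ind P - ind Q \<in> {-1, 0, 1}"
  by (simp add: ind_def)

theorem mainTheorem14:
  fixes k i :: nat
  assumes "k \<ge> 2" and "1 \<le> i" and "i \<le> k - 1"
    and "odd (k choose i)" and "odd ((k - 1) choose i)"
  shows "\<not> admits_PST (J_vertices (2 * k) k) (J_adj i)"
proof
  let ?V = "J_vertices (2 * k) k"
  let ?U = "{1..2*k}"
  assume "admits_PST ?V (J_adj i)"
  then obtain u v \<tau> where u: "u \<in> ?V" and v: "v \<in> ?V" and uv: "u \<noteq> v"
    and h: "cmod (transition ?V (J_adj i) \<tau> u v) = 1"
    unfolding admits_PST_def by blast
  define \<gamma> where "\<gamma> = transition ?V (J_adj i) \<tau> u v"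
  have g1: "cmod \<gamma> = 1" using h by (simp add: \<gamma>_def)
  have g0: "\<gamma> \<noteq> 0" using g1 by auto
  have ik: "i < k" using assms by linarith
  have usub: "u \<subseteq> ?U" and cu: "card u = k" using u by (auto simp: J_vertices_def)
  have vsub: "v \<subseteq> ?U" and cv: "card v = k" using v by (auto simp: J_vertices_def)
  have fu: "finite u" using usub finite_subset by blast
  have fv: "finite v" using vsub finite_subset by blast
  have cw: "card (?U - u) = k" using card_Diff_subset[OF fu usub] cu by simp
  obtain a b where "pairs a b 0 \<and> a ` {..<0} \<subseteq> u \<and> b ` {..<0} \<subseteq> ?U - u"
    using get_pairs[OF u, of 0] by blast
  hence "\<gamma> * of_int (xv a b 0 v) = exp (\<i> * complex_of_real \<tau> * of_int (Eb k i 0))"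
    using pst_pairs[OF _ _ _ u v _ h] ik unfolding \<gamma>_def by auto
  hence h0: "exp (\<i> * complex_of_real \<tau> * of_int (Eb k i 0)) = \<gamma>" by (simp add: xv_def)
  have one: "\<gamma> * of_int (ind (a0 \<in> v) - ind (b0 \<in> v)) = exp (\<i> * complex_of_real \<tau> * of_int (Eb k i 1))"
    if a0: "a0 \<in> u" and b0: "b0 \<in> ?U - u" for a0 b0
  proof -
    have pr: "pairs (\<lambda>_. a0) (\<lambda>_. b0) 1"
      by unfold_locales (use a0 b0 in \<open>auto simp: inj_on_def\<close>)
    have "\<gamma> * of_int (xv (\<lambda>_. a0) (\<lambda>_. b0) 1 v) = exp (\<i> * complex_of_real \<tau> * of_int (Eb k i 1))"
      unfolding \<gamma>_def by (rule pst_pairs[OF pr _ _ u v _ h]) (use a0 b0 ik in auto)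
    thus ?thesis by (simp add: xv_def)
  qed
  have une: "u \<noteq> {}"
  proof
    assume "u = {}" hence "card u = 0" by simp
    with cu assms(1) show False by simp
  qed
  have wne: "?U - u \<noteq> {}"
  proof
    assume "?U - u = {}" hence "card (?U - u) = 0" by simp
    with cw assms(1) show False by simp
  qed
  obtain a0 where a0: "a0 \<in> u" using une by blast
  obtain b0 where b0: "b0 \<in> ?U - u" using wne by blast
  define d0 where "d0 = ind (a0 \<in> v) - ind (b0 \<in> v)"
  have dconst: "ind (a \<in> v) - ind (b \<in> v) = d0" if a: "a \<in> u" and b: "b \<in> ?U - u" for a b
  proof -
    have "\<gamma> * of_int (ind (a \<in> v) - ind (b \<in> v)) = \<gamma> * of_int d0"
      using one[OF a b] one[OF a0 b0] by (simp add: d0_def)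
    hence "complex_of_int (ind (a \<in> v) - ind (b \<in> v)) = complex_of_int d0" using g0 by simp
    thus ?thesis by (simp only: of_int_eq_iff)
  qed
  have "cmod (\<gamma> * of_int d0) = 1" using one[OF a0 b0] norm_E by (simp add: d0_def)
  hence "\<bar>d0\<bar> = 1" using g1 by (simp add: norm_mult)
  moreover have "d0 \<in> {-1, 0, 1}" unfolding d0_def by (rule ind_diff_cases)
  ultimately have "d0 = 1 \<or> d0 = -1" by auto
  have vc: "v = ?U - u"
  proof (cases "d0 = 1")
    case True
    have "u \<subseteq> v"
    proof
      fix a assume a: "a \<in> u"
      have "ind (a \<in> v) - ind (b0 \<in> v) = 1" using dconst[OF a b0] True by simp
      thus "a \<in> v" by (auto simp: ind_def split: if_splits)
    qed
    hence "u = v" using card_subset_eq[OF fv] cu cv by simp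
    with uv show ?thesis by simp
  next
    case False
    hence dm: "d0 = -1" using \<open>d0 = 1 \<or> d0 = -1\<close> by simp
    have "?U - u \<subseteq> v"
    proof
      fix b assume b: "b \<in> ?U - u"
      have "ind (a0 \<in> v) - ind (b \<in> v) = -1" using dconst[OF a0 b] dm by simp
      thus "b \<in> v" by (auto simp: ind_def split: if_splits)
    qed
    hence "?U - u = v" using card_subset_eq[OF fv] cw cv by simp
    thus ?thesis by simp
  qed
  have h1: "exp (\<i> * complex_of_real \<tau> * of_int (Eb k i 1)) = (-1) * \<gamma>"
  proof -
    have "ind (a0 \<in> v) - ind (b0 \<in> v) = -1" using vc a0 b0 by (simp add: ind_def)
    thus ?thesis using one[OF a0 b0] by simp
  qed
  obtain J where J: "2 \<le> J" "J \<le> i" "J - 1 \<le> k - i" "even ((k-J) choose i)"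
      "\<forall>t. 1 \<le> t \<and> t \<le> J \<longrightarrow> odd ((k-J) choose (i-t))"
    using nt_main[OF assms(2) ik assms(4) assms(5)] by blast
  obtain a b where ab: "pairs a b J" "a ` {..<J} \<subseteq> u" "b ` {..<J} \<subseteq> ?U - u"
    using get_pairs[OF u, of J] J ik by auto
  have "\<gamma> * of_int (xv a b J v) = exp (\<i> * complex_of_real \<tau> * of_int (Eb k i J))"
    unfolding \<gamma>_def by (rule pst_pairs[OF ab u v _ h]) (use ik in auto)
  moreover have "xv a b J v = (-1)^J"
  proof -
    have "xv a b J v = (\<Prod>l<J. (-1::int))"
      unfolding xv_def by (rule prod.cong[OF refl]) (use ab vc in \<open>auto simp: ind_def\<close>)
    thus ?thesis by simp
  qed
  ultimately have hJ: "exp (\<i> * complex_of_real \<tau> * of_int (Eb k i J)) = (-1)^J * \<gamma>" by (simp add: mult.commute)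
  have d1: "Eb k i 0 - Eb k i 1 = 2 * (int (k choose i) * int ((k-1) choose i))"
    using Eb01[OF assms(2) ik] by simp
  have om: "odd (int (k choose i) * int ((k-1) choose i))" using assms(4,5) by simp
  have dJ: "4 dvd (Eb k i J + (-1)^J)" by (rule Ebj_mod4[OF J(1-3) ik J(4,5)])
  have a04: "4 dvd (Eb k i 0 - 1)" using Eb0[of i k] ik odd_sq_mod4[OF assms(4)] by simp
  show False by (rule final_contra[OF h0 h1 hJ d1 om dJ a04])
qed


end
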